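(* In the probabilistic Outcome Logic instance, let $C$ be a program, $\varphi$ an outcome assertion, $A$ a state assertion, and $p,q\in[0,1]$ with $q>1-p$. If there is an outcome assertion $\varphi'$ with $\varphi'\Rightarrow\varphi$, $\mathsf{sat}(\varphi')$ and $\vDash\langle\varphi'\rangle\,C\,\langle\mathbb{P}[\lnot A]\ge q\rangle$, then $\not\vDash\langle\varphi\rangle\,C\,\langle\mathbb{P}[A]\ge p\rangle$.
   Context: Subdistributions $\mu\colon\Sigma\to[0,1]$ with mass $|\mu|=\sum_\sigma\mu(\sigma)\le1$, support $\mathsf{supp}(\mu)$, zero $\varnothing$, and partial pointwise sum $+$ (defined when total mass $\le1$). Execution model: $\mathsf{bind}(\mu,k)=\sum_{x\in\mathsf{supp}(\mu)}\mu(x)\,k(x)$, $\mathsf{unit}(x)=\delta_x$, monoid $(+,\varnothing)$; a program $C$ has semantics $[\![C]\!]\colon\Sigma\to\mathcal{D}\Sigma$ and $[\![C]\!]^\dagger(\mu)=\mathsf{bind}(\mu,[\![C]\!])$. Atomic outcome assertions $\mathbb{P}[A]=p$ for state assertions $A$: $\mu\vDash\mathbb{P}[A]=p$ iff $|\mu|=p$ and all states in $\mathsf{supp}(\mu)$ satisfy $A$. Outcome assertions use $\top$ (always), $\bot$, $\top^\oplus$ (only $\varnothing$), classical $\land,\Rightarrow$, and $\oplus$: $\mu\vDash\varphi\oplus\psi$ iff $\mu=\mu_1+\mu_2$ with $\mu_1\vDash\varphi$, $\mu_2\vDash\psi$. $\mathbb{P}[A]\ge p$ abbreviates $(\mathbb{P}[A]=p)\oplus\top$.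 $\vDash\langle\varphi\rangle C\langle\psi\rangle$ iff $\mu\vDash\varphi$ implies $[\![C]\!]^\dagger(\mu)\vDash\psi$ for every $\mu$. $\varphi'\Rightarrow\varphi$ means every $\mu$ satisfying $\varphi'$ satisfies $\varphi$; $\mathsf{sat}(\varphi')$ means some $\mu$ satisfies $\varphi'$. *)

theory Defs
  imports "HOL-Analysis.Analysis"
begin

definition is_subdist :: "('s \<Rightarrow> real) \<Rightarrow> bool" where
  "is_subdist \<mu> \<longleftrightarrow> (\<forall>x. 0 \<le> \<mu> x) \<and> \<mu> summable_on UNIV \<and> infsum \<mu> UNIV \<le> 1"

definition mass :: "('s \<Rightarrow> real) \<Rightarrow> real" where
  "mass \<mu> = infsum \<mu> UNIV"

definition supp :: "('s \<Rightarrow> real) \<Rightarrow> 's set" where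
  "supp \<mu> = {x. \<mu> x \<noteq> 0}"

definition zero_dist :: "'s \<Rightarrow> real" where
  "zero_dist = (\<lambda>_. 0)"

definition bind_dist :: "('s \<Rightarrow> real) \<Rightarrow> ('s \<Rightarrow> 't \<Rightarrow> real) \<Rightarrow> ('t \<Rightarrow> real)" where
  "bind_dist \<mu> k = (\<lambda>y. infsum (\<lambda>x. \<mu> x * k x y) (supp \<mu>))"

definition is_kernel :: "('s \<Rightarrow> 's \<Rightarrow> real) \<Rightarrow> bool" where
  "is_kernel C \<longleftrightarrow> (\<forall>x. is_subdist (C x))"

definition lift_sem :: "('s \<Rightarrow> 's \<Rightarrow> real) \<Rightarrow> ('s \<Rightarrow> real) \<Rightarrow> ('s \<Rightarrow> real)" where
  "lift_sem C \<mu> = bind_dist \<mu> C"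

datatype 's oassn =
    OTop
  | OBot
  | OTopPlus
  | OAnd "'s oassn" "'s oassn"
  | OImp "'s oassn" "'s oassn"
  | OPlus "'s oassn" "'s oassn"
  | OProb "'s \<Rightarrow> bool" real

primrec models :: "('s \<Rightarrow> real) \<Rightarrow> 's oassn \<Rightarrow> bool" where
  "models \<mu> OTop = True"
| "models \<mu> OBot = False"
| "models \<mu> OTopPlus = (\<mu> = zero_dist)"
| "models \<mu> (OAnd \<phi> \<psi>) = (models \<mu> \<phi> \<and> models \<mu> \<psi>)"
| "models \<mu> (OImp \<phi> \<psi>) = (models \<mu> \<phi> \<longrightarrow> models \<mu> \<psi>)"
| "models \<mu> (OPlus \<phi> \<psi>) = (\<exists>\<mu>1 \<mu>2. is_subdist \<mu>1 \<and> is_subdist \<mu>2 \<and>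
        \<mu> = (\<lambda>x. \<mu>1 x + \<mu>2 x) \<and> models \<mu>1 \<phi> \<and> models \<mu>2 \<psi>)"
| "models \<mu> (OProb A p) = (mass \<mu> = p \<and> (\<forall>x\<in>supp \<mu>. A x))"

definition prob_ge :: "('s \<Rightarrow> bool) \<Rightarrow> real \<Rightarrow> 's oassn" where
  "prob_ge A p = OPlus (OProb A p) OTop"

definition valid_triple :: "'s oassn \<Rightarrow> ('s \<Rightarrow> 's \<Rightarrow> real) \<Rightarrow> 's oassn \<Rightarrow> bool" where
  "valid_triple \<phi> C \<psi> \<longleftrightarrow> (\<forall>\<mu>. is_subdist \<mu> \<longrightarrow> models \<mu> \<phi> \<longrightarrow> models (lift_sem C \<mu>) \<psi>)"

definition oimplies :: "'s oassn \<Rightarrow> 's oassn \<Rightarrow> bool" where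
  "oimplies \<phi>' \<phi> \<longleftrightarrow> (\<forall>\<mu>. is_subdist \<mu> \<longrightarrow> models \<mu> \<phi>' \<longrightarrow> models \<mu> \<phi>)"

definition osat :: "'s oassn \<Rightarrow> bool" where
  "osat \<phi> \<longleftrightarrow> (\<exists>\<mu>. is_subdist \<mu> \<and> models \<mu> \<phi>)"

end

theory Submission
  imports Defs
begin

lemma infsum_finite_sum_swap:
  fixes g :: "'b \<Rightarrow> 'a \<Rightarrow> real"
  assumes "finite F" "\<And>y. y \<in> F \<Longrightarrow> g y summable_on S"
  shows "(\<lambda>x. \<Sum>y\<in>F. g y x) summable_on S \<and> infsum (\<lambda>x. \<Sum>y\<in>F. g y x) S = (\<Sum>y\<in>F. infsum (g y) S)"
  using assms
proof (induction F rule: finite_induct)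
  case empty
  then show ?case by simp
next
  case (insert a F)
  then have IH: "(\<lambda>x. \<Sum>y\<in>F. g y x) summable_on S"
      "infsum (\<lambda>x. \<Sum>y\<in>F. g y x) S = (\<Sum>y\<in>F. infsum (g y) S)" by auto
  have ga: "g a summable_on S" using insert by auto
  show ?case
    using insert(1,2) IH ga summable_on_add[OF ga IH(1)] infsum_add[OF ga IH(1)] by simp
qed

lemma lift_mass:
  assumes K: "is_kernel C" and M: "is_subdist \<mu>" and S: "lift_sem C \<mu> summable_on UNIV"
  shows "infsum (lift_sem C \<mu>) UNIV \<le> 1"
proof (rule infsum_le_finite_sums[OF S])
  fix F :: "'a set" assume F: "finite F" "F \<subseteq> UNIV"
  have Cnn: "\<And>x y. 0 \<le> C x y" and Cs: "\<And>x. C x summable_on UNIV"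
    and Cle: "\<And>x. infsum (C x) UNIV \<le> 1"
    using K unfolding is_kernel_def is_subdist_def by auto
  have mnn: "\<And>x. 0 \<le> \<mu> x" and ms: "\<mu> summable_on UNIV" and mle: "infsum \<mu> UNIV \<le> 1"
    using M unfolding is_subdist_def by auto
  have msupp: "\<mu> summable_on supp \<mu>" using ms summable_on_subset by blast
  have Cpt: "C x y \<le> 1" for x y
  proof -
    have "sum (C x) {y} \<le> infsum (C x) UNIV"
      by (rule finite_sum_le_infsum[OF Cs]) (auto simp: Cnn)
    then show ?thesis using Cle[of x] by simp
  qed
  have Fsum: "(\<Sum>y\<in>F. C x y) \<le> 1" for x
  proof -
    have "sum (C x) F \<le> infsum (C x) UNIV"
      by (rule finite_sum_le_infsum[OF Cs]) (auto simp: F Cnn)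
    then show ?thesis using Cle[of x] by simp
  qed
  have summ: "(\<lambda>x. \<mu> x * C x y) summable_on supp \<mu>" for y
    by (rule summable_on_comparison_test[OF msupp])
       (auto simp: mnn Cnn intro: mult_left_le[OF Cpt])
  have "sum (lift_sem C \<mu>) F = (\<Sum>y\<in>F. infsum (\<lambda>x. \<mu> x * C x y) (supp \<mu>))"
    unfolding lift_sem_def bind_dist_def by simp
  also have "\<dots> = infsum (\<lambda>x. \<Sum>y\<in>F. \<mu> x * C x y) (supp \<mu>)"
    using infsum_finite_sum_swap[of F "\<lambda>y x. \<mu> x * C x y" "supp \<mu>"] F summ by simp
  also have "\<dots> \<le> infsum \<mu> (supp \<mu>)"
  proof (rule infsum_mono)
    show "(\<lambda>x. \<Sum>y\<in>F. \<mu> x * C x y) summable_on supp \<mu>"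
      using infsum_finite_sum_swap[of F "\<lambda>y x. \<mu> x * C x y" "supp \<mu>"] F summ by simp
    show "\<mu> summable_on supp \<mu>" by (rule msupp)
    fix x show "(\<Sum>y\<in>F. \<mu> x * C x y) \<le> \<mu> x"
      using mult_left_le[OF Fsum mnn[of x]] by (simp add: sum_distrib_left)
  qed
  also have "\<dots> \<le> infsum \<mu> UNIV"
    by (rule infsum_mono2[OF msupp ms]) (auto simp: mnn)
  finally show "sum (lift_sem C \<mu>) F \<le> 1" using mle by simp
qed

theorem theorem5p11:
  fixes C :: "'s \<Rightarrow> 's \<Rightarrow> real" and \<phi> :: "'s oassn" and A :: "'s \<Rightarrow> bool" and p q :: real
  assumes "is_kernel C"
    and "0 \<le> p" "p \<le> 1" "0 \<le> q" "q \<le> 1" "q > 1 - p"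
    and "\<exists>\<phi>'. oimplies \<phi>' \<phi> \<and> osat \<phi>' \<and> valid_triple \<phi>' C (prob_ge (\<lambda>s. \<not> A s) q)"
  shows "\<not> valid_triple \<phi> C (prob_ge A p)"
proof
  assume V: "valid_triple \<phi> C (prob_ge A p)"
  obtain \<phi>' where I: "oimplies \<phi>' \<phi>" and Sat: "osat \<phi>'"
    and V': "valid_triple \<phi>' C (prob_ge (\<lambda>s. \<not> A s) q)" using assms(7) by blast
  obtain \<mu> where M: "is_subdist \<mu>" "models \<mu> \<phi>'" using Sat unfolding osat_def by blast
  have M2: "models \<mu> \<phi>" using I M unfolding oimplies_def by blast
  define \<nu> where "\<nu> = lift_sem C \<mu>"
  obtain \<mu>1 \<mu>2 where A1: "is_subdist \<mu>1" "is_subdist \<mu>2" "\<nu> = (\<lambda>x. \<mu>1 x + \<mu>2 x)"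
      "mass \<mu>1 = q" "\<forall>x\<in>supp \<mu>1. \<not> A x"
    using V' M unfolding valid_triple_def prob_ge_def \<nu>_def by fastforce
  obtain \<mu>3 \<mu>4 where A2: "is_subdist \<mu>3" "is_subdist \<mu>4" "\<nu> = (\<lambda>x. \<mu>3 x + \<mu>4 x)"
      "mass \<mu>3 = p" "\<forall>x\<in>supp \<mu>3. A x"
    using V M(1) M2 unfolding valid_triple_def prob_ge_def \<nu>_def by fastforce
  have s1: "\<mu>1 summable_on UNIV" and s2: "\<mu>2 summable_on UNIV" and s3: "\<mu>3 summable_on UNIV"
    using A1 A2 unfolding is_subdist_def by auto
  have nn: "\<And>x. 0 \<le> \<mu>1 x" "\<And>x. 0 \<le> \<mu>2 x" "\<And>x. 0 \<le> \<mu>3 x" "\<And>x. 0 \<le> \<mu>4 x"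
    using A1 A2 unfolding is_subdist_def by auto
  have sn: "\<nu> summable_on UNIV" using A1(3) summable_on_add[OF s1 s2] by simp
  have pt: "\<mu>1 x + \<mu>3 x \<le> \<nu> x" for x
  proof (cases "A x")
    case True
    then have "\<mu>1 x = 0" using A1(5) unfolding supp_def by auto
    then show ?thesis using A2(3) nn(4)[of x] by simp
  next
    case False
    then have "\<mu>3 x = 0" using A2(5) unfolding supp_def by auto
    then show ?thesis using A1(3) nn(2)[of x] by simp
  qed
  have "q + p = infsum (\<lambda>x. \<mu>1 x + \<mu>3 x) UNIV"
    using infsum_add[OF s1 s3] A1(4) A2(4) unfolding mass_def by simp
  also have "\<dots> \<le> infsum \<nu> UNIV"
    by (rule infsum_mono[OF summable_on_add[OF s1 s3] sn]) (simp add: pt)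
  also have "\<dots> \<le> 1" using lift_mass[OF assms(1) M(1)] sn unfolding \<nu>_def by simp
  finally show False using assms(6) by simp
qed

end
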